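(* Let $\Sigma^*$ be an $n\times n$ positive definite matrix with $\Omega^*=(\Sigma^* )^{-1}$ whose conditional independence structure is a tree $T^*$, and suppose that for every leaf $a$ of $T^*$ with neighbor $b$ we have $\Omega^*_{aa}>|\Omega^*_{ab}|$. Let $D^*$ be a diagonal matrix with nonnegative entries and $\Sigma^o=\Sigma^*+D^*$. Let $\Sigma^o=\Sigma'+D'$ where $\Sigma'$ is positive definite with conditional independence structure a tree $T'$, $D'$ is diagonal with nonnegative entries, and $\Omega'=(\Sigma')^{-1}$ satisfies $\Omega'_{aa}>|\Omega'_{ab}|$ for every leaf $a$ of $T'$ with neighbor $b$ in $T'$. Then $T'=T^*$.
   Context: For an $n\times n$ positive definite matrix $\Sigma$ with inverse $\Omega$, its conditional independence structure is the graph on $\{1,\dots,n\}$ with an edge $\{i,j\}$ ($i\neq j$) iff $\Omega_{ij}\neq 0$. *)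

theory Defs
  imports "HOL-Analysis.Analysis"
begin

definition pos_def :: "real^'n^'n \<Rightarrow> bool" where
  "pos_def A \<longleftrightarrow> transpose A = A \<and> (\<forall>x::real^'n. x \<noteq> 0 \<longrightarrow> x \<bullet> (A *v x) > 0)"

definition ci_adj :: "real^'n^'n \<Rightarrow> 'n \<Rightarrow> 'n \<Rightarrow> bool" where
  "ci_adj S i j \<longleftrightarrow> i \<noteq> j \<and> matrix_inv S $ i $ j \<noteq> 0"

text \<open>Simple graphs on the finite vertex type given by a symmetric irreflexive relation.\<close>
definition graph_connected :: "('n \<Rightarrow> 'n \<Rightarrow> bool) \<Rightarrow> bool" where
  "graph_connected E \<longleftrightarrow> (\<forall>u v. (u, v) \<in> {(x, y). E x y}\<^sup>*)"

definition has_cycle :: "('n \<Rightarrow> 'n \<Rightarrow> bool) \<Rightarrow> bool" where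
  "has_cycle E \<longleftrightarrow> (\<exists>vs. length vs \<ge> 3 \<and> distinct vs \<and>
      (\<forall>k < length vs - 1. E (vs ! k) (vs ! Suc k)) \<and> E (last vs) (hd vs))"

definition is_tree :: "('n \<Rightarrow> 'n \<Rightarrow> bool) \<Rightarrow> bool" where
  "is_tree E \<longleftrightarrow> graph_connected E \<and> \<not> has_cycle E"

definition is_leaf :: "('n::finite \<Rightarrow> 'n \<Rightarrow> bool) \<Rightarrow> 'n \<Rightarrow> bool" where
  "is_leaf E a \<longleftrightarrow> card {b. E a b} = 1"

definition leaf_cond :: "real^'n::finite^'n \<Rightarrow> bool" where
  "leaf_cond S \<longleftrightarrow> (\<forall>a b. is_leaf (ci_adj S) a \<and> ci_adj S a b \<longrightarrow>
      matrix_inv S $ a $ a > \<bar>matrix_inv S $ a $ b\<bar>)"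

definition nonneg_diag :: "real^'n^'n \<Rightarrow> bool" where
  "nonneg_diag D \<longleftrightarrow> (\<forall>i j. i \<noteq> j \<longrightarrow> D $ i $ j = 0) \<and> (\<forall>i. D $ i $ i \<ge> 0)"

end

theory Submission
  imports Defs "HOL-Library.Transitive_Closure_Table"
begin

definition sepg :: "('n \<Rightarrow> 'n \<Rightarrow> bool) \<Rightarrow> 'n \<Rightarrow> 'n \<Rightarrow> 'n \<Rightarrow> bool" where
  "sepg E c a b \<longleftrightarrow> a \<noteq> c \<and> b \<noteq> c \<and> (a, b) \<notin> {(x,y). E x y \<and> x \<noteq> c \<and> y \<noteq> c}\<^sup>*"

lemma nb_cycle:
  assumes E: "E a b"
    and r: "(b, a) \<in> {(x,y). E x y \<and> \<not> ((x = a \<and> y = b) \<or> (x = b \<and> y = a))}\<^sup>*"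
    and ab: "a \<noteq> b"
  shows "has_cycle E"
proof -
  define R where "R = (\<lambda>x y. E x y \<and> \<not> ((x = a \<and> y = b) \<or> (x = b \<and> y = a)))"
  have "R\<^sup>*\<^sup>* b a" using r by (simp add: rtranclp_rtrancl_eq R_def)
  then obtain xs where "rtrancl_path R b xs a" by (auto simp: rtranclp_eq_rtrancl_path)
  then obtain ys where p: "rtrancl_path R b ys a" and d: "distinct (b # ys)"
    by (rule rtrancl_path_distinct)
  have ne: "ys \<noteq> []" using p ab by (cases rule: rtrancl_path.cases) auto
  have len: "length ys \<ge> 2"
  proof (rule ccontr)
    assume "\<not> ?thesis"
    have "length ys \<noteq> 0" using ne by simp
    with \<open>\<not> 2 \<le> length ys\<close> have "length ys = 1" by linarith
    then obtain y where ys: "ys = [y]" by (auto simp: length_Suc_conv)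
    from p[unfolded ys] have "R b y" "y = a"
      by (auto elim: rtrancl_path.cases)
    then show False by (simp add: R_def)
  qed
  show ?thesis unfolding has_cycle_def
  proof (intro exI[of _ "b # ys"] conjI allI impI)
    show "3 \<le> length (b # ys)" using len by simp
    show "distinct (b # ys)" by fact
    fix k assume k: "k < length (b # ys) - 1"
    then have "R ((b # ys) ! k) (ys ! k)" using rtrancl_path_nth[OF p] by simp
    then show "E ((b # ys) ! k) ((b # ys) ! Suc k)" by (simp add: R_def)
  next
    have "last (b # ys) = a" using rtrancl_path_last[OF p ne] ne by simp
    then show "E (last (b # ys)) (hd (b # ys))" using E by simp
  qed
qed

lemma leaf_sep:
  assumes "is_leaf E x" "E x y" "a \<noteq> x" "a \<noteq> y" and irr: "\<And>u. \<not> E u u"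
  shows "sepg E y x a"
proof -
  have nb: "\<And>z. E x z \<Longrightarrow> z = y"
  proof -
    fix z assume "E x z"
    have "card {b. E x b} = 1" using assms(1) by (simp add: is_leaf_def)
    then obtain w where eq: "{b. E x b} = {w}" by (auto simp: card_Suc_eq)
    have zin: "z \<in> {b. E x b}" using \<open>E x z\<close> by simp
    have yin: "y \<in> {b. E x b}" using assms(2) by simp
    show "z = y" using zin yin unfolding eq by simp
  qed
  have "x = z" if "(x, z) \<in> {(u,v). E u v \<and> u \<noteq> y \<and> v \<noteq> y}\<^sup>*" for z
    using that
  proof (induction rule: rtrancl_induct)
    case base then show ?case by simp
  next
    case (step u v) then show ?case using nb by auto
  qed
  moreover have "x \<noteq> y" using irr assms(2) by blast
  ultimately show ?thesis using assms(3,4) unfolding sepg_def by blast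
qed

lemma conn_nb:
  assumes "graph_connected E" "w \<noteq> x"
  shows "\<exists>y. E x y"
proof -
  have "(x, w) \<in> {(x,y). E x y}\<^sup>*" using assms(1) by (simp add: graph_connected_def)
  then show ?thesis using assms(2) by (cases rule: converse_rtranclE) auto
qed

lemma two_nb_sep:
  assumes sym: "\<And>u v. E u v \<Longrightarrow> E v u" and irr: "\<And>u. \<not> E u u"
    and nc: "\<not> has_cycle E"
    and vp: "E v p" and vq: "E v q" and pq: "p \<noteq> q"
  shows "sepg E v p q"
proof (rule ccontr)
  assume ns: "\<not> sepg E v p q"
  have pv: "p \<noteq> v" "q \<noteq> v" using vp vq irr by metis+
  let ?R = "{(x,y). E x y \<and> x \<noteq> v \<and> y \<noteq> v}"
  let ?R' = "{(x,y). E x y \<and> \<not> ((x = v \<and> y = p) \<or> (x = p \<and> y = v))}"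
  have "(p, q) \<in> ?R\<^sup>*" using ns pv by (simp add: sepg_def)
  moreover have "?R \<subseteq> ?R'" by auto
  ultimately have "(p, q) \<in> ?R'\<^sup>*" using rtrancl_mono by blast
  moreover have "(q, v) \<in> ?R'" using sym[OF vq] pq pv by simp
  ultimately have "(p, v) \<in> ?R'\<^sup>*" by (rule rtrancl_into_rtrancl)
  then have "has_cycle E" using nb_cycle[of E v p, OF vp _ pv(1)[symmetric]] by simp
  with nc show False by simp
qed

lemma nonint_leaf:
  assumes sym: "\<And>u v. E u v \<Longrightarrow> E v u" and irr: "\<And>u. \<not> E u u"
    and tr: "is_tree E" and "w \<noteq> v" and ni: "\<forall>a b. \<not> sepg E v a b"
  shows "is_leaf E (v::'n::finite)"
proof -
  have gc: "graph_connected E" using tr by (simp add: is_tree_def)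
  obtain y where y: "E v y" using conn_nb[OF gc \<open>w \<noteq> v\<close>] by blast
  have "{b. E v b} = {y}"
  proof safe
    fix z assume "E v z"
    show "z = y"
    proof (rule ccontr)
      assume "z \<noteq> y"
      have nc: "\<not> has_cycle E" using tr by (simp add: is_tree_def)
      have "sepg E v z y" by (rule two_nb_sep[OF sym irr nc \<open>E v z\<close> y \<open>z \<noteq> y\<close>])
      with ni show False by blast
    qed
  qed (rule y)
  then show ?thesis by (simp add: is_leaf_def)
qed

lemma path_avoid:
  assumes "rtrancl_path E x ys z" "a \<notin> set (x # ys)"
  shows "(x, z) \<in> {(u,w). E u w \<and> u \<noteq> a \<and> w \<noteq> a}\<^sup>*"
  using assms
proof (induction rule: rtrancl_path.induct)
  case (base x) then show ?case by simp
next
  case (step x y ys z)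
  then have 1: "(y, z) \<in> {(u,w). E u w \<and> u \<noteq> a \<and> w \<noteq> a}\<^sup>*" by simp
  have 2: "(x, y) \<in> {(u,w). E u w \<and> u \<noteq> a \<and> w \<noteq> a}" using step by auto
  show ?case by (rule converse_rtrancl_into_rtrancl[OF 2 1])
qed

lemma nonadj_sep:
  assumes sym: "\<And>u v. E u v \<Longrightarrow> E v u" and irr: "\<And>u. \<not> E u u"
    and tr: "is_tree E" and ab: "a \<noteq> b" and nab: "\<not> E a b"
  shows "\<exists>c. sepg E c a b"
proof -
  have "E\<^sup>*\<^sup>* a b" using tr by (simp add: is_tree_def graph_connected_def rtranclp_rtrancl_eq)
  then obtain xs where "rtrancl_path E a xs b" by (auto simp: rtranclp_eq_rtrancl_path)
  then obtain ys where p: "rtrancl_path E a ys b" and d: "distinct (a # ys)"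
    by (rule rtrancl_path_distinct)
  from p ab obtain p1 rest where ys: "ys = p1 # rest" and e1: "E a p1" and p2: "rtrancl_path E p1 rest b"
    by (cases rule: rtrancl_path.cases) auto
  have p1b: "p1 \<noteq> b" using e1 nab by auto
  have ap1: "a \<noteq> p1" using e1 irr by auto
  have "sepg E p1 a b"
  proof (rule ccontr)
    assume ns: "\<not> sepg E p1 a b"
    let ?R = "{(x,y). E x y \<and> x \<noteq> p1 \<and> y \<noteq> p1}"
    let ?R' = "{(x,y). E x y \<and> \<not> ((x = a \<and> y = p1) \<or> (x = p1 \<and> y = a))}"
    have "(a, b) \<in> ?R\<^sup>*" using ns ap1 p1b by (simp add: sepg_def)
    moreover have sR: "sym ?R" using sym by (auto simp: sym_def)
    ultimately have "(b, a) \<in> ?R\<^sup>*" using sym_rtrancl[OF sR] by (meson symD)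
    moreover have "?R \<subseteq> ?R'" by auto
    ultimately have ba: "(b, a) \<in> ?R'\<^sup>*" using rtrancl_mono by blast
    have "(p1, b) \<in> {(u,w). E u w \<and> u \<noteq> a \<and> w \<noteq> a}\<^sup>*"
      using path_avoid[OF p2] d ys by simp
    moreover have "{(u,w). E u w \<and> u \<noteq> a \<and> w \<noteq> a} \<subseteq> ?R'" by auto
    ultimately have "(p1, b) \<in> ?R'\<^sup>*" using rtrancl_mono by blast
    then have "(p1, a) \<in> ?R'\<^sup>*" using ba by (rule rtrancl_trans)
    then have "has_cycle E" by (rule nb_cycle[of E a p1, OF e1 _ ap1])
    with tr show False by (simp add: is_tree_def)
  qed
  then show ?thesis by blast
qed

lemma adj_nosep: "E a b \<Longrightarrow> \<not> sepg E c a b"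
  unfolding sepg_def by auto

lemma signing:
  fixes E :: "'n::finite \<Rightarrow> 'n \<Rightarrow> bool" and p :: "'n \<Rightarrow> 'n \<Rightarrow> bool"
  assumes sym: "\<And>u v. E u v \<Longrightarrow> E v u" and irr: "\<And>u. \<not> E u u" and nc: "\<not> has_cycle E"
    and psym: "\<And>u v. p u v = p v u"
  shows "\<exists>t::'n \<Rightarrow> bool. \<forall>a b. E a b \<longrightarrow> (t a \<noteq> t b \<longleftrightarrow> p a b)"
proof -
  have "\<exists>t::'n \<Rightarrow> bool. \<forall>a\<in>W. \<forall>b\<in>W. E a b \<longrightarrow> (t a \<noteq> t b \<longleftrightarrow> p a b)" if "finite W" for W
    using that
  proof (induction W rule: finite_induct)
    case empty then show ?case by simp
  next
    case (insert v W)
    from insert.IH obtain t :: "'n \<Rightarrow> bool" where t: "\<forall>a\<in>W. \<forall>b\<in>W. E a b \<longrightarrow> (t a \<noteq> t b \<longleftrightarrow> p a b)" by blast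
    define R where "R = {(x,y). E x y \<and> x \<in> W \<and> y \<in> W}"
    have sR: "sym R" using sym by (auto simp: sym_def R_def)
    have Rs: "(y,x) \<in> R\<^sup>*" if "(x,y) \<in> R\<^sup>*" for x y using sym_rtrancl[OF sR] that by (meson symD)
    have uniq: "w1 = w2" if "w1 \<in> W" "w2 \<in> W" "E v w1" "E v w2" "(w1,w2) \<in> R\<^sup>*" for w1 w2
    proof (rule ccontr)
      assume ne: "w1 \<noteq> w2"
      let ?R' = "{(x,y). E x y \<and> \<not> ((x = v \<and> y = w1) \<or> (x = w1 \<and> y = v))}"
      have "R \<subseteq> ?R'" using insert.hyps(2) by (auto simp: R_def)
      then have "(w1,w2) \<in> ?R'\<^sup>*" using that(5) rtrancl_mono by blast
      moreover have "v \<noteq> w2" using that(2) insert.hyps(2) by blast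
      then have "(w2, v) \<in> ?R'" using sym[OF that(4)] ne by simp
      ultimately have "(w1, v) \<in> ?R'\<^sup>*" by (rule rtrancl_into_rtrancl)
      moreover have "v \<noteq> w1" using that(1) insert.hyps(2) by blast
      ultimately have "has_cycle E" by (rule nb_cycle[of E v w1, OF that(3)])
      with nc show False by simp
    qed
    define N where "N = {w \<in> W. E v w}"
    define C where "C x \<longleftrightarrow> (\<exists>w. w \<in> N \<and> (w,x) \<in> R\<^sup>*)" for x
    define rt where "rt x = (SOME w. w \<in> N \<and> (w,x) \<in> R\<^sup>*)" for x
    have rt: "rt x \<in> N \<and> (rt x, x) \<in> R\<^sup>*" if "C x" for x
      using that unfolding C_def rt_def by (rule someI_ex)
    have rt_eq: "rt x = w" if "w \<in> N" "(w,x) \<in> R\<^sup>*" for x w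
    proof -
      have Cx: "C x" using that C_def by blast
      from rt[OF Cx] have r1: "rt x \<in> N" and r2: "(rt x, x) \<in> R\<^sup>*" by auto
      have "(rt x, w) \<in> R\<^sup>*" using r2 Rs[OF that(2)] by (rule rtrancl_trans)
      then show ?thesis using uniq r1 that(1) unfolding N_def by auto
    qed
    define t' where "t' x = (if x = v then True else if C x then ((t x = t (rt x)) = (\<not> p v (rt x))) else t x)" for x
    show ?case
    proof (intro exI[of _ t'] ballI impI)
      fix a b assume a: "a \<in> insert v W" and b: "b \<in> insert v W" and ab: "E a b"
      consider "a = v" | "b = v" | "a \<in> W" "b \<in> W" "a \<noteq> v" "b \<noteq> v"
        using a b insert.hyps(2) by auto
      then show "(t' a \<noteq> t' b) = p a b"
      proof cases
        case 1
        then have bW: "b \<in> W" "b \<noteq> v" using b ab irr by auto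
        have bN: "b \<in> N" using bW ab 1 N_def by auto
        have rb: "rt b = b" using rt_eq[OF bN] by simp
        have Cb: "C b" using bN C_def by blast
        show ?thesis using 1 bW Cb rb by (simp add: t'_def)
      next
        case 2
        then have aW: "a \<in> W" "a \<noteq> v" using a ab irr by auto
        have aN: "a \<in> N" using aW sym[OF ab] 2 N_def by auto
        have ra: "rt a = a" using rt_eq[OF aN] by simp
        have Ca: "C a" using aN C_def by blast
        show ?thesis using 2 aW Ca ra psym[of a v] by (simp add: t'_def)
      next
        case 3
        have abR: "(a,b) \<in> R" using 3 ab R_def by auto
        show ?thesis
        proof (cases "C a")
          case True
          obtain w where w: "w \<in> N" "(w,a) \<in> R\<^sup>*" using True C_def by blast
          have wb: "(w,b) \<in> R\<^sup>*" using w(2) abR by (rule rtrancl_into_rtrancl)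
          have "rt a = w" "rt b = w" using rt_eq w wb by auto
          moreover have "C b" using w wb C_def by blast
          moreover have "(t a \<noteq> t b) = p a b" using t 3 ab by blast
          ultimately show ?thesis using True 3 by (auto simp: t'_def)
        next
          case False
          have "\<not> C b"
          proof
            assume "C b"
            then obtain w where w: "w \<in> N" "(w,b) \<in> R\<^sup>*" by (auto simp: C_def)
            have "(b,a) \<in> R" using abR sR by (meson symD)
            with w(2) have "(w,a) \<in> R\<^sup>*" by (rule rtrancl_into_rtrancl)
            then have "C a" unfolding C_def using w(1) by blast
            with False show False by simp
          qed
          moreover have "(t a \<noteq> t b) = p a b" using t 3 ab by blast
          ultimately show ?thesis using False 3 by (simp add: t'_def)
        qed
      qed
    qed
  qed
  from this[of UNIV] show ?thesis by simp
qed

lemma sum_one: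
  fixes f :: "'n::finite \<Rightarrow> 'b::comm_monoid_add"
  assumes "\<And>y. y \<noteq> a \<Longrightarrow> f y = 0"
  shows "(\<Sum>y\<in>UNIV. f y) = f a"
proof -
  have "(\<Sum>y\<in>UNIV. f y) = (\<Sum>y\<in>{a}. f y)"
    by (rule sum.mono_neutral_right) (use assms in auto)
  then show ?thesis by simp
qed

lemma sum_two:
  fixes f :: "'n::finite \<Rightarrow> 'b::comm_monoid_add"
  assumes "a \<noteq> b" "\<And>y. y \<noteq> a \<Longrightarrow> y \<noteq> b \<Longrightarrow> f y = 0"
  shows "(\<Sum>y\<in>UNIV. f y) = f a + f b"
proof -
  have "(\<Sum>y\<in>UNIV. f y) = (\<Sum>y\<in>{a,b}. f y)"
    by (rule sum.mono_neutral_right) (use assms in auto)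
  then show ?thesis using assms(1) by simp
qed

lemma zm:
  fixes A :: "'n::finite \<Rightarrow> 'n \<Rightarrow> real" and u :: "'n \<Rightarrow> real"
  assumes pd: "\<And>v. (\<exists>x. v x \<noteq> 0) \<Longrightarrow> (\<Sum>a\<in>UNIV. v a * (\<Sum>b\<in>UNIV. A a b * v b)) > 0"
    and offd: "\<And>a b. a \<noteq> b \<Longrightarrow> A a b \<le> 0"
    and h: "\<And>x. u x < 0 \<Longrightarrow> (\<Sum>y\<in>UNIV. A x y * u y) \<ge> 0"
  shows "u x \<ge> 0"
proof -
  define m where "m x = min (u x) 0" for x
  define q where "q x = max (u x) 0" for x
  have uq: "u y = m y + q y" for y by (simp add: m_def q_def)
  have s1: "(\<Sum>a\<in>UNIV. m a * (\<Sum>b\<in>UNIV. A a b * u b)) \<le> 0"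
  proof (rule sum_nonpos)
    fix a show "m a * (\<Sum>b\<in>UNIV. A a b * u b) \<le> 0"
    proof (cases "u a < 0")
      case True then show ?thesis using h[OF True] by (simp add: m_def mult_nonpos_nonneg)
    next
      case False then show ?thesis by (simp add: m_def)
    qed
  qed
  have s2: "(\<Sum>a\<in>UNIV. m a * (\<Sum>b\<in>UNIV. A a b * q b)) \<ge> 0"
  proof -
    have "(\<Sum>a\<in>UNIV. m a * (\<Sum>b\<in>UNIV. A a b * q b)) = (\<Sum>a\<in>UNIV. \<Sum>b\<in>UNIV. m a * A a b * q b)"
      by (simp add: sum_distrib_left mult.assoc)
    also have "\<dots> \<ge> 0"
    proof (intro sum_nonneg)
      fix a b show "m a * A a b * q b \<ge> 0"
      proof (cases "a = b")
        case True then show ?thesis by (cases "u a < 0") (auto simp: m_def q_def)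
      next
        case False
        then have "A a b \<le> 0" by (rule offd)
        moreover have "m a \<le> 0" "q b \<ge> 0" by (auto simp: m_def q_def)
        ultimately show ?thesis by (metis mult_nonneg_nonneg mult_nonpos_nonpos)
      qed
    qed
    finally show ?thesis .
  qed
  have split: "(\<Sum>b\<in>UNIV. A a b * u b) = (\<Sum>b\<in>UNIV. A a b * m b) + (\<Sum>b\<in>UNIV. A a b * q b)" for a
    by (simp add: uq distrib_left sum.distrib)
  have "(\<Sum>a\<in>UNIV. m a * (\<Sum>b\<in>UNIV. A a b * m b)) = (\<Sum>a\<in>UNIV. m a * (\<Sum>b\<in>UNIV. A a b * u b)) - (\<Sum>a\<in>UNIV. m a * (\<Sum>b\<in>UNIV. A a b * q b))"
    by (simp add: split distrib_left sum.distrib)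
  with s1 s2 have "(\<Sum>a\<in>UNIV. m a * (\<Sum>b\<in>UNIV. A a b * m b)) \<le> 0" by linarith
  then have "\<not> (\<exists>x. m x \<noteq> 0)" using pd[of m] by force
  then have "m x = 0" by blast
  then show ?thesis by (simp add: m_def)
qed

lemma zclose:
  fixes A :: "'n::finite \<Rightarrow> 'n \<Rightarrow> real" and u :: "'n \<Rightarrow> real"
  assumes nonneg: "\<And>y. u y \<ge> 0" and offd: "\<And>a b. a \<noteq> b \<Longrightarrow> A a b \<le> 0"
    and ux: "u x = 0" and sx: "(\<Sum>y\<in>UNIV. A x y * u y) \<ge> 0" and xy: "x \<noteq> y" and Axy: "A x y \<noteq> 0"
  shows "u y = 0"
proof -
  have terms: "A x z * u z \<le> 0" for z
  proof (cases "z = x")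
    case True then show ?thesis using ux by simp
  next
    case False then show ?thesis using offd[of x z] nonneg[of z] by (simp add: mult_nonpos_nonneg)
  qed
  have "(\<Sum>z\<in>UNIV. A x z * u z) \<le> 0" using terms by (simp add: sum_nonpos)
  with sx have "(\<Sum>z\<in>UNIV. - (A x z * u z)) = 0" by (simp add: sum_negf)
  moreover have "\<forall>z\<in>UNIV. 0 \<le> - (A x z * u z)" using terms by simp
  moreover have "(sum (\<lambda>z. - (A x z * u z)) UNIV = 0) = (\<forall>z\<in>UNIV. - (A x z * u z) = 0)"
    by (rule sum_nonneg_eq_0_iff) (use terms in auto)
  ultimately have "\<forall>z\<in>UNIV. - (A x z * u z) = 0" by simp
  then have "A x y * u y = 0" by simp
  with Axy show ?thesis by simp
qed

locale tmodel =
  fixes S :: "real^'n::finite^'n"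
  assumes pd: "pos_def S" and tr: "is_tree (ci_adj S)" and lc: "leaf_cond S"
begin

abbreviation "Om \<equiv> matrix_inv S"
abbreviation "E \<equiv> ci_adj S"

lemma S_sym: "S$a$b = S$b$a"
proof -
  have "transpose S = S" using pd by (simp add: pos_def_def)
  then have "transpose S $ a $ b = S $ a $ b" by simp
  then show ?thesis by (simp add: transpose_def)
qed

lemma quadS: "x \<noteq> 0 \<Longrightarrow> x \<bullet> (S *v x) > 0"
  using pd by (simp add: pos_def_def)

lemma inv: "invertible S"
  unfolding invertible_left_inverse matrix_left_invertible_ker
proof (intro allI impI)
  fix x assume "S *v x = 0"
  then have "x \<bullet> (S *v x) = 0" by simp
  then show "x = 0" using quadS by force
qed

lemma SO: "S ** Om = mat 1" and OS: "Om ** S = mat 1"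
proof -
  have "\<exists>A'. S ** A' = mat 1 \<and> A' ** S = mat 1" using inv by (simp add: invertible_def)
  then have "S ** Om = mat 1 \<and> Om ** S = mat 1" unfolding matrix_inv_def by (rule someI_ex)
  then show "S ** Om = mat 1" "Om ** S = mat 1" by auto
qed

lemma Om_sym: "Om$a$b = Om$b$a"
proof -
  have tS: "transpose S = S" using pd by (simp add: pos_def_def)
  have "transpose Om ** S = mat 1"
    using arg_cong[OF SO, of transpose] by (simp add: matrix_transpose_mul tS)
  then have "transpose Om = Om"
    by (metis OS SO matrix_mul_assoc matrix_mul_lid matrix_mul_rid)
  then have "transpose Om $ a $ b = Om $ a $ b" by simp
  then show ?thesis by (simp add: transpose_def)
qed

lemma OS_sum: "(\<Sum>k\<in>UNIV. Om$a$k * S$k$b) = (if a = b then 1 else 0)"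
proof -
  have "(Om ** S) $ a $ b = mat 1 $ a $ b" using OS by simp
  then show ?thesis by (simp add: matrix_matrix_mult_def mat_def)
qed

lemma vec_quad: "x \<bullet> (M *v x) = (\<Sum>a\<in>UNIV. x$a * (\<Sum>b\<in>UNIV. M$a$b * x$b))" for x :: "real^'n" and M
  by (simp add: inner_vec_def matrix_vector_mult_def)

lemma Om_pd:
  assumes "\<exists>x. v x \<noteq> 0"
  shows "(\<Sum>a\<in>UNIV. v a * (\<Sum>b\<in>UNIV. Om$a$b * v b)) > 0"
proof -
  define x where "x = (\<chi> i. v i)"
  have x0: "x \<noteq> 0" using assms by (auto simp: x_def vec_eq_iff)
  define y where "y = Om *v x"
  have Sy: "S *v y = x" by (simp add: y_def matrix_vector_mul_assoc SO)
  have "y \<noteq> 0" using Sy x0 by auto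
  then have "y \<bullet> (S *v y) > 0" by (rule quadS)
  then have "x \<bullet> (Om *v x) > 0" using Sy by (simp add: y_def inner_commute)
  then show ?thesis by (simp add: vec_quad x_def)
qed

lemma S_pd:
  assumes "\<exists>x. v x \<noteq> 0"
  shows "(\<Sum>a\<in>UNIV. v a * (\<Sum>b\<in>UNIV. S$a$b * v b)) > 0"
proof -
  define x where "x = (\<chi> i. v i)"
  have x0: "x \<noteq> 0" using assms by (auto simp: x_def vec_eq_iff)
  then have "x \<bullet> (S *v x) > 0" by (rule quadS)
  then show ?thesis by (simp add: vec_quad x_def)
qed

lemma diag_pos: "S$a$a > 0"
proof -
  define v where "v i = (if i = a then (1::real) else 0)" for i
  have "(\<Sum>x\<in>UNIV. v x * (\<Sum>y\<in>UNIV. S$x$y * v y)) > 0"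
    by (rule S_pd) (auto simp: v_def)
  moreover have "(\<Sum>x\<in>UNIV. v x * (\<Sum>y\<in>UNIV. S$x$y * v y)) = v a * (\<Sum>y\<in>UNIV. S$a$y * v y)"
    by (rule sum_one) (simp add: v_def)
  moreover have "(\<Sum>y\<in>UNIV. S$a$y * v y) = S$a$a * v a"
    by (rule sum_one) (simp add: v_def)
  ultimately show ?thesis by (simp add: v_def)
qed

lemma pd2:
  assumes ab: "a \<noteq> b"
  shows "(S$a$b)^2 < S$a$a * S$b$b"
proof -
  define t where "t = - S$a$b / S$a$a"
  define v where "v i = (if i = a then t else if i = b then 1 else 0)" for i
  have inner: "(\<Sum>y\<in>UNIV. S$x$y * v y) = S$x$a * t + S$x$b" for x
    by (subst sum_two[OF ab]) (auto simp: v_def ab ab[symmetric])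
  have "(\<Sum>x\<in>UNIV. v x * (\<Sum>y\<in>UNIV. S$x$y * v y)) > 0"
    by (rule S_pd, rule exI[of _ b]) (simp add: v_def ab[symmetric])
  moreover have "(\<Sum>x\<in>UNIV. v x * (\<Sum>y\<in>UNIV. S$x$y * v y)) =
      (\<Sum>x\<in>UNIV. v x * (S$x$a * t + S$x$b))" by (simp add: inner)
  moreover have "(\<Sum>x\<in>UNIV. v x * (S$x$a * t + S$x$b)) =
      t * (S$a$a * t + S$a$b) + (S$b$a * t + S$b$b)"
    by (subst sum_two[OF ab]) (auto simp: v_def ab ab[symmetric])
  ultimately have "t * (S$a$a * t + S$a$b) + (S$b$a * t + S$b$b) > 0" by simp
  moreover have "S$a$a * t + S$a$b = 0" using diag_pos[of a] by (simp add: t_def)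
  ultimately have "S$b$a * t + S$b$b > 0" by simp
  then have "S$b$b - (S$a$b)^2 / S$a$a > 0" using S_sym[of b a] by (simp add: t_def power2_eq_square)
  then have "(S$b$b - (S$a$b)^2 / S$a$a) * S$a$a > 0" using diag_pos[of a] by simp
  then show ?thesis using diag_pos[of a] by (simp add: field_simps)
qed

lemma E_sym: "E a b = E b a"
  by (auto simp: ci_adj_def Om_sym)

lemma E_irr: "\<not> E a a"
  by (simp add: ci_adj_def)

lemma nc: "\<not> has_cycle E" using tr by (simp add: is_tree_def)

lemma sg_ex: "\<exists>s::'n \<Rightarrow> real. (\<forall>x. s x = 1 \<or> s x = -1) \<and> (\<forall>a b. a \<noteq> b \<longrightarrow> s a * s b * Om$a$b \<le> 0)"
proof -
  obtain t :: "'n \<Rightarrow> bool" where t: "\<forall>a b. E a b \<longrightarrow> (t a \<noteq> t b \<longleftrightarrow> Om$a$b > 0)"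
    using signing[of E "\<lambda>a b. Om$a$b > 0"] E_sym E_irr nc Om_sym by metis
  define s where "s x = (if t x then (1::real) else -1)" for x
  have "s a * s b * Om$a$b \<le> 0" if "a \<noteq> b" for a b
  proof (cases "E a b")
    case True
    with t have "t a \<noteq> t b \<longleftrightarrow> Om$a$b > 0" by blast
    then show ?thesis by (cases "t a"; cases "t b") (auto simp: s_def)
  next
    case False
    with that have "Om$a$b = 0" by (simp add: ci_adj_def)
    then show ?thesis by simp
  qed
  moreover have "\<forall>x. s x = 1 \<or> s x = -1" by (simp add: s_def)
  ultimately show ?thesis by blast
qed

definition "sg = (SOME s::'n \<Rightarrow> real. (\<forall>x. s x = 1 \<or> s x = -1) \<and> (\<forall>a b. a \<noteq> b \<longrightarrow> s a * s b * Om$a$b \<le> 0))"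

lemma sg: "sg x = 1 \<or> sg x = -1" and sg_off: "a \<noteq> b \<Longrightarrow> sg a * sg b * Om$a$b \<le> 0"
  using someI_ex[OF sg_ex] unfolding sg_def[symmetric] by blast+

lemma sg2: "sg x * sg x = 1" using sg[of x] by auto

lemma sg_nz: "sg x \<noteq> 0" using sg[of x] by auto

lemma At_pd:
  assumes "\<exists>x. v x \<noteq> 0"
  shows "(\<Sum>a\<in>UNIV. v a * (\<Sum>b\<in>UNIV. (sg a * sg b * Om$a$b) * v b)) > 0"
proof -
  define w where "w x = sg x * v x" for x
  have "\<exists>x. w x \<noteq> 0" using assms sg_nz by (auto simp: w_def)
  then have "(\<Sum>a\<in>UNIV. w a * (\<Sum>b\<in>UNIV. Om$a$b * w b)) > 0" by (rule Om_pd)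
  moreover have "w a * (\<Sum>b\<in>UNIV. Om$a$b * w b) = v a * (\<Sum>b\<in>UNIV. (sg a * sg b * Om$a$b) * v b)" for a
    by (simp add: w_def sum_distrib_left mult_ac)
  ultimately show ?thesis by simp
qed

lemma At_apply:
  "(\<Sum>y\<in>UNIV. (sg x * sg y * Om$x$y) * (sg y * c * v y)) = sg x * c * (\<Sum>y\<in>UNIV. Om$x$y * v y)"
proof -
  have eq: "(sg x * sg y * Om$x$y) * (sg y * c * v y) = sg x * c * (Om$x$y * v y)" for y
  proof -
    have "(sg x * sg y * Om$x$y) * (sg y * c * v y) = sg x * c * (Om$x$y * v y) * (sg y * sg y)"
      by (simp add: mult_ac)
    then show ?thesis by (simp add: sg2)
  qed
  have "(\<Sum>y\<in>UNIV. (sg x * sg y * Om$x$y) * (sg y * c * v y)) = (\<Sum>y\<in>UNIV. sg x * c * (Om$x$y * v y))"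
    by (rule sum.cong[OF refl]) (rule eq)
  then show ?thesis by (simp add: sum_distrib_left)
qed


lemma At_offd: "a \<noteq> b \<Longrightarrow> sg a * sg b * Om$a$b \<le> 0" by (rule sg_off)

lemma E_At: "E x y \<Longrightarrow> sg x * sg y * Om$x$y \<noteq> 0"
  using sg_nz by (auto simp: ci_adj_def)

lemma pos: "sg a * sg b * S$a$b > 0"
proof -
  define u where "u y = sg y * sg b * S$y$b" for y
  have Au: "(\<Sum>y\<in>UNIV. (sg x * sg y * Om$x$y) * u y) = (if x = b then 1 else 0)" for x
  proof -
    have "(\<Sum>y\<in>UNIV. (sg x * sg y * Om$x$y) * u y) = sg x * sg b * (\<Sum>y\<in>UNIV. Om$x$y * S$y$b)"
      unfolding u_def by (rule At_apply)
    also have "\<dots> = (if x = b then 1 else 0)" by (auto simp: OS_sum sg2)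
    finally show ?thesis .
  qed
  have nn: "u x \<ge> 0" for x
    apply (rule zm[of "\<lambda>a b. sg a * sg b * Om$a$b" u x])
      apply (rule At_pd, assumption)
     apply (rule sg_off, assumption)
    apply (simp add: Au)
    done
  have ub: "u b > 0" using diag_pos[of b] by (simp add: u_def sg2)
  have "u a \<noteq> 0"
  proof
    assume ua: "u a = 0"
    have "u y = 0" if "(a,y) \<in> {(x,y). E x y}\<^sup>*" for y
      using that
    proof (induction rule: rtrancl_induct)
      case base then show ?case by (rule ua)
    next
      case (step x y)
      then have Exy: "E x y" and ux: "u x = 0" by auto
      have "x \<noteq> y" using Exy E_irr by auto
      show ?case
        by (rule zclose[of u "\<lambda>a b. sg a * sg b * Om$a$b" x y])
           (use nn sg_off ux Au E_At[OF Exy] \<open>x \<noteq> y\<close> in auto)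
    qed
    moreover have "(a,b) \<in> {(x,y). E x y}\<^sup>*" using tr by (simp add: is_tree_def graph_connected_def)
    ultimately have "u b = 0" by blast
    with ub show False by simp
  qed
  with nn[of a] have "u a > 0" by simp
  then show ?thesis by (simp add: u_def)
qed

lemma tau:
  assumes ab: "a \<noteq> b" and ac: "a \<noteq> c" and bc: "b \<noteq> c"
  shows "sepg E c a b \<Longrightarrow> S$a$b * S$c$c = S$a$c * S$c$b"
    and "\<not> sepg E c a b \<Longrightarrow> S$a$b * (S$a$b * S$c$c - S$a$c * S$c$b) > 0"
proof -
  define k where "k = S$c$b / S$c$c"
  define v where "v y = S$y$b - k * S$y$c" for y
  have Ov: "(\<Sum>y\<in>UNIV. Om$x$y * v y) = (if x = b then 1 else 0) - k * (if x = c then 1 else 0)" for x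
  proof -
    have "(\<Sum>y\<in>UNIV. Om$x$y * v y) = (\<Sum>y\<in>UNIV. Om$x$y * S$y$b) - k * (\<Sum>y\<in>UNIV. Om$x$y * S$y$c)"
      by (simp add: v_def right_diff_distrib sum_subtractf sum_distrib_left mult_ac)
    then show ?thesis by (simp add: OS_sum)
  qed
  have vc: "v c = 0" using diag_pos[of c] by (simp add: v_def k_def)
  have va_eq: "v a * S$c$c = S$a$b * S$c$c - S$a$c * S$c$b"
    using diag_pos[of c] by (simp add: v_def k_def field_simps)
  let ?R = "{(x,y). E x y \<and> x \<noteq> c \<and> y \<noteq> c}"
  {
    assume sp: "sepg E c a b"
    define A where "A = {x. (a,x) \<in> ?R\<^sup>*}"
    have Anc: "x \<noteq> c" if "x \<in> A" for x
    proof -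
      have "(a,x) \<in> ?R\<^sup>*" using that A_def by simp
      then show ?thesis using ac by (induction rule: rtrancl_induct) auto
    qed
    have bA: "b \<notin> A" using sp by (simp add: A_def sepg_def)
    have aA: "a \<in> A" by (simp add: A_def)
    define w where "w y = (if y \<in> A then v y else 0)" for y
    have inner: "(\<Sum>y\<in>UNIV. Om$x$y * w y) = 0" if xA: "x \<in> A" for x
    proof -
      have tm: "Om$x$y * w y = Om$x$y * v y" for y
      proof (cases "y \<in> A")
        case True then show ?thesis by (simp add: w_def)
      next
        case False
        show ?thesis
        proof (cases "y = c")
          case True then show ?thesis using False by (simp add: w_def vc)
        next
          case yc: False
          have "Om$x$y = 0"
          proof (rule ccontr)
            assume "Om$x$y \<noteq> 0"
            moreover have "x \<noteq> y" using xA False by auto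
            ultimately have "E x y" by (simp add: ci_adj_def)
            then have "(x,y) \<in> ?R" using Anc[OF xA] yc by simp
            then have "y \<in> A" using xA unfolding A_def by (auto intro: rtrancl_into_rtrancl)
            with False show False by simp
          qed
          then show ?thesis by simp
        qed
      qed
      have "(\<Sum>y\<in>UNIV. Om$x$y * w y) = (\<Sum>y\<in>UNIV. Om$x$y * v y)"
        by (rule sum.cong[OF refl]) (rule tm)
      also have "\<dots> = 0" using Ov[of x] Anc[OF xA] xA bA by auto
      finally show ?thesis .
    qed
    have "(\<Sum>x\<in>UNIV. w x * (\<Sum>y\<in>UNIV. Om$x$y * w y)) = 0"
    proof (rule sum.neutral, rule ballI)
      fix x show "w x * (\<Sum>y\<in>UNIV. Om$x$y * w y) = 0"
      proof (cases "x \<in> A")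
        case True then show ?thesis using inner[OF True] by simp
      next
        case False then show ?thesis by (simp add: w_def)
      qed
    qed
    then have "\<not> (\<exists>x. w x \<noteq> 0)" using Om_pd[of w] by force
    then have "w a = 0" by blast
    then have "v a = 0" using aA by (simp add: w_def)
    then show "S$a$b * S$c$c = S$a$c * S$c$b" using va_eq by simp
  }
  {
    assume ns: "\<not> sepg E c a b"
    define u where "u y = sg y * sg b * v y" for y
    have Au: "(\<Sum>y\<in>UNIV. (sg x * sg y * Om$x$y) * u y) = sg x * sg b * ((if x = b then 1 else 0) - k * (if x = c then 1 else 0))" for x
      unfolding u_def by (simp add: At_apply[of x "sg b" v] Ov)
    have Au2: "x \<noteq> c \<Longrightarrow> (\<Sum>y\<in>UNIV. (sg x * sg y * Om$x$y) * u y) = (if x = b then 1 else 0)" for x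
      by (auto simp: Au sg2)
    have uc: "u c = 0" by (simp add: u_def vc)
    have nn: "u x \<ge> 0" for x
      apply (rule zm[of "\<lambda>a b. sg a * sg b * Om$a$b" u x])
        apply (rule At_pd, assumption)
       apply (rule sg_off, assumption)
      subgoal for x using uc Au2[of x] by (cases "x = c") auto
      done
    have ub: "u b > 0"
    proof -
      have "(S$b$c)^2 < S$b$b * S$c$c" by (rule pd2[OF bc])
      then have "S$b$b - S$c$b * S$b$c / S$c$c > 0" using diag_pos[of c] S_sym[of c b]
        by (simp add: field_simps power2_eq_square)
      then show ?thesis by (simp add: u_def sg2 v_def k_def)
    qed
    have "u a \<noteq> 0"
    proof
      assume ua: "u a = 0"
      have "u y = 0" if "(a,y) \<in> ?R\<^sup>*" for y
        using that
      proof (induction rule: rtrancl_induct)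
        case base then show ?case by (rule ua)
      next
        case (step x y)
        then have Exy: "E x y" and xc: "x \<noteq> c" and ux: "u x = 0" by auto
        have "x \<noteq> y" using Exy E_irr by auto
        show ?case
          by (rule zclose[of u "\<lambda>a b. sg a * sg b * Om$a$b" x y])
             (use nn sg_off ux Au2[OF xc] E_At[OF Exy] \<open>x \<noteq> y\<close> in auto)
      qed
      moreover have "(a,b) \<in> ?R\<^sup>*" using ns ac bc by (simp add: sepg_def)
      ultimately have "u b = 0" by blast
      with ub show False by simp
    qed
    with nn[of a] have ua: "u a > 0" by simp
    have p1: "sg a * sg b * S$a$b > 0" by (rule pos)
    have "(sg a * sg b * S$a$b) * u a > 0" using p1 ua by simp
    moreover have "(sg a * sg b * S$a$b) * u a = S$a$b * v a * ((sg a * sg a) * (sg b * sg b))"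
      by (simp add: u_def mult_ac)
    ultimately have "S$a$b * v a > 0" by (simp add: sg2)
    then have "S$a$b * v a * S$c$c > 0" using diag_pos[of c] by simp
    then show "S$a$b * (S$a$b * S$c$c - S$a$c * S$c$b) > 0" using va_eq by (simp add: mult.assoc)
  }
qed

lemma leafS:
  assumes lf: "is_leaf E a" and ab: "E a b"
  shows "\<bar>S$a$b\<bar> < S$b$b"
proof -
  have card: "card {x. E a x} = 1" using lf by (simp add: is_leaf_def)
  then obtain w where eq: "{x. E a x} = {w}" by (auto simp: card_Suc_eq)
  have nb: "E a k \<Longrightarrow> k = b" for k
  proof -
    assume "E a k"
    then have "k \<in> {x. E a x}" "b \<in> {x. E a x}" using ab by simp_all
    then show "k = b" unfolding eq by simp
  qed
  have anb: "a \<noteq> b" using ab E_irr by auto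
  have "(\<Sum>k\<in>UNIV. Om$a$k * S$k$b) = 0" using OS_sum[of a b] anb by simp
  moreover have "(\<Sum>k\<in>UNIV. Om$a$k * S$k$b) = Om$a$a * S$a$b + Om$a$b * S$b$b"
  proof (rule sum_two[OF anb])
    fix y assume "y \<noteq> a" "y \<noteq> b"
    then have "\<not> E a y" using nb by auto
    with \<open>y \<noteq> a\<close> have "Om$a$y = 0" by (auto simp: ci_adj_def)
    then show "Om$a$y * S$y$b = 0" by simp
  qed
  ultimately have e: "Om$a$a * S$a$b = - (Om$a$b * S$b$b)" by simp
  have l: "Om$a$a > \<bar>Om$a$b\<bar>" using lc lf ab by (auto simp: leaf_cond_def)
  have db: "S$b$b > 0" by (rule diag_pos)
  have Oaa: "Om$a$a > 0" using l by linarith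
  have "\<bar>Om$a$a * S$a$b\<bar> = \<bar>Om$a$b * S$b$b\<bar>" using e by simp
  then have "Om$a$a * \<bar>S$a$b\<bar> = \<bar>Om$a$b\<bar> * S$b$b"
    by (simp add: abs_mult abs_of_pos[OF Oaa] abs_of_pos[OF db])
  also have "\<dots> < Om$a$a * S$b$b" using l db by (simp add: mult_strict_right_mono)
  finally have "Om$a$a * \<bar>S$a$b\<bar> < Om$a$a * S$b$b" .
  then show ?thesis using mult_less_cancel_left_pos[OF Oaa] by blast
qed

end

definition amodel :: "('n::finite \<Rightarrow> 'n \<Rightarrow> bool) \<Rightarrow> ('n \<Rightarrow> real) \<Rightarrow> ('n \<Rightarrow> 'n \<Rightarrow> real) \<Rightarrow> bool" where
 "amodel E d s \<longleftrightarrow>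
   (\<forall>a b. s a b = s b a) \<and>
   (\<forall>a b. a \<noteq> b \<longrightarrow> s a b \<noteq> 0) \<and>
   (\<forall>a b c. a \<noteq> b \<and> a \<noteq> c \<and> b \<noteq> c \<longrightarrow> sepg E c a b \<longrightarrow> s a b * d c = s a c * s c b) \<and>
   (\<forall>a b c. a \<noteq> b \<and> a \<noteq> c \<and> b \<noteq> c \<longrightarrow> \<not> sepg E c a b \<longrightarrow> s a b * (s a b * d c - s a c * s c b) > 0) \<and>
   (\<forall>a b. a \<noteq> b \<longrightarrow> (s a b)^2 < d a * d b) \<and> (\<forall>a. d a > 0) \<and>
   (\<forall>a b. is_leaf E a \<and> E a b \<longrightarrow> \<bar>s a b\<bar> < d b) \<and>
   (\<forall>x y a. is_leaf E x \<and> E x y \<and> a \<noteq> x \<and> a \<noteq> y \<longrightarrow> sepg E y x a) \<and>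
   (\<forall>v w. v \<noteq> w \<and> (\<forall>a b. \<not> sepg E v a b) \<longrightarrow> is_leaf E v) \<and>
   (\<forall>a b. E a b \<longleftrightarrow> a \<noteq> b \<and> (\<forall>c. \<not> sepg E c a b))"

lemma sepg_dist: "sepg E c a b \<Longrightarrow> a \<noteq> b \<and> a \<noteq> c \<and> b \<noteq> c"
  unfolding sepg_def by auto


lemma amc0: assumes "amodel E d s" shows "\<forall>a b. s a b = s b a"
  using assms unfolding amodel_def by (elim conjE) assumption
lemma amc1: assumes "amodel E d s" shows "\<forall>a b. a \<noteq> b \<longrightarrow> s a b \<noteq> 0"
  using assms unfolding amodel_def by (elim conjE) assumption
lemma amc2: assumes "amodel E d s" shows "\<forall>a b c. a \<noteq> b \<and> a \<noteq> c \<and> b \<noteq> c \<longrightarrow> sepg E c a b \<longrightarrow> s a b * d c = s a c * s c b"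
  using assms unfolding amodel_def by (elim conjE) assumption
lemma amc3: assumes "amodel E d s" shows "\<forall>a b c. a \<noteq> b \<and> a \<noteq> c \<and> b \<noteq> c \<longrightarrow> \<not> sepg E c a b \<longrightarrow> s a b * (s a b * d c - s a c * s c b) > 0"
  using assms unfolding amodel_def by (elim conjE) assumption
lemma amc4: assumes "amodel E d s" shows "\<forall>a b. a \<noteq> b \<longrightarrow> (s a b)^2 < d a * d b"
  using assms unfolding amodel_def by (elim conjE) assumption
lemma amc5: assumes "amodel E d s" shows "\<forall>a. d a > 0"
  using assms unfolding amodel_def by (elim conjE) assumption
lemma amc6: assumes "amodel E d s" shows "\<forall>a b. is_leaf E a \<and> E a b \<longrightarrow> \<bar>s a b\<bar> < d b"
  using assms unfolding amodel_def by (elim conjE) assumption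
lemma amc7: assumes "amodel E d s" shows "\<forall>x y a. is_leaf E x \<and> E x y \<and> a \<noteq> x \<and> a \<noteq> y \<longrightarrow> sepg E y x a"
  using assms unfolding amodel_def by (elim conjE) assumption
lemma amc8: assumes "amodel E d s" shows "\<forall>v w. v \<noteq> w \<and> (\<forall>a b. \<not> sepg E v a b) \<longrightarrow> is_leaf E v"
  using assms unfolding amodel_def by (elim conjE) assumption
lemma amc9: assumes "amodel E d s" shows "\<forall>a b. E a b \<longleftrightarrow> a \<noteq> b \<and> (\<forall>c. \<not> sepg E c a b)"
  using assms unfolding amodel_def by (elim conjE) assumption

lemma am_sym: "amodel E d s \<Longrightarrow> s a b = s b a" using amc0 by metis
lemma am_nz: "amodel E d s \<Longrightarrow> a \<noteq> b \<Longrightarrow> s a b \<noteq> 0" using amc1 by metis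
lemma am_sep: "amodel E d s \<Longrightarrow> sepg E c a b \<Longrightarrow> s a b * d c = s a c * s c b"
  using amc2 sepg_dist by metis
lemma am_nsep: "amodel E d s \<Longrightarrow> a \<noteq> b \<Longrightarrow> a \<noteq> c \<Longrightarrow> b \<noteq> c \<Longrightarrow> \<not> sepg E c a b \<Longrightarrow> s a b * (s a b * d c - s a c * s c b) > 0"
  using amc3 by metis
lemma am_pd2: "amodel E d s \<Longrightarrow> a \<noteq> b \<Longrightarrow> (s a b)^2 < d a * d b" using amc4 by metis
lemma am_dpos: "amodel E d s \<Longrightarrow> d a > 0" using amc5 by metis
lemma am_leaf: "amodel E d s \<Longrightarrow> is_leaf E a \<Longrightarrow> E a b \<Longrightarrow> \<bar>s a b\<bar> < d b" using amc6 by metis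
lemma am_ls: "amodel E d s \<Longrightarrow> is_leaf E x \<Longrightarrow> E x y \<Longrightarrow> a \<noteq> x \<Longrightarrow> a \<noteq> y \<Longrightarrow> sepg E y x a"
  using amc7 by metis
lemma am_nl: "amodel E d s \<Longrightarrow> v \<noteq> w \<Longrightarrow> (\<forall>a b. \<not> sepg E v a b) \<Longrightarrow> is_leaf E v"
  using amc8 by metis
lemma am_adj: "amodel E d s \<Longrightarrow> E a b \<longleftrightarrow> a \<noteq> b \<and> (\<forall>c. \<not> sepg E c a b)"
  using amc9 by metis

lemma leaf_nb:
  assumes "is_leaf E x" shows "\<exists>y. E x y"
proof -
  obtain w where "{y. E x y} = {w}" using assms by (auto simp: is_leaf_def card_Suc_eq)
  then have "w \<in> {y. E x y}" by simp
  then show ?thesis by blast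
qed

lemma cmp:
  assumes M: "amodel E d s" and ab: "a \<noteq> b" and av: "a \<noteq> v" and bv: "b \<noteq> v"
    and h: "s a b * x = s a v * s v b"
  shows "x \<le> d v" and "x = d v \<Longrightarrow> sepg E v a b"
proof -
  have nz: "s a b \<noteq> 0" using am_nz[OF M ab] .
  have "x \<le> d v \<and> (x = d v \<longrightarrow> sepg E v a b)"
  proof (cases "sepg E v a b")
    case True
    then have e: "s a b * d v = s a v * s v b" using am_sep[OF M] by blast
    have "s a b * x = s a b * d v" using h e by simp
    then have "x = d v" using nz by simp
    then show ?thesis using True by simp
  next
    case False
    then have "s a b * (s a b * d v - s a v * s v b) > 0" using am_nsep[OF M ab av bv] by blast
    then have "s a b * s a b * (d v - x) > 0" using h by (simp add: algebra_simps)
    moreover have "s a b * s a b > 0" using nz by (cases "s a b > 0") (auto simp: mult_neg_neg)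
    ultimately have "d v - x > 0" by (simp add: zero_less_mult_iff)
    then show ?thesis by simp
  qed
  then show "x \<le> d v" and "x = d v \<Longrightarrow> sepg E v a b" by auto
qed

lemma int_eq:
  assumes M1: "amodel E1 d1 s" and M2: "amodel E2 d2 s"
    and s1: "sepg E1 v a b" and s2: "sepg E2 v a' b'"
  shows "d1 v = d2 v"
proof -
  have h1: "s a b * d1 v = s a v * s v b" using am_sep[OF M1 s1] .
  have h2: "s a' b' * d2 v = s a' v * s v b'" using am_sep[OF M2 s2] .
  have "d1 v \<le> d2 v" using cmp(1)[OF M2 _ _ _ h1] sepg_dist[OF s1] by blast
  moreover have "d2 v \<le> d1 v" using cmp(1)[OF M1 _ _ _ h2] sepg_dist[OF s2] by blast
  ultimately show ?thesis by simp
qed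

lemma sep_transfer:
  assumes M1: "amodel E1 d1 s" and M2: "amodel E2 d2 s"
    and eq: "d1 v = d2 v" and s1: "sepg E1 v a b"
  shows "sepg E2 v a b"
proof -
  have h1: "s a b * d1 v = s a v * s v b" using am_sep[OF M1 s1] .
  show ?thesis using cmp(2)[OF M2 _ _ _ h1] sepg_dist[OF s1] eq by blast
qed

lemma only_nb:
  assumes M: "amodel E d s" and xy: "x \<noteq> y"
    and ally: "\<And>a. a \<noteq> x \<Longrightarrow> a \<noteq> y \<Longrightarrow> sepg E y x a"
    and sx: "sepg E x p q"
  shows False
proof -
  have sym: "s u w = s w u" for u w using am_sym[OF M] .
  have nz: "u \<noteq> w \<Longrightarrow> s u w \<noteq> 0" for u w using am_nz[OF M] .
  have pd2: "(s x y)^2 < d x * d y" using am_pd2[OF M xy] .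
  have dpos: "d u > 0" for u using am_dpos[OF M] .
  have sep_eq: "sepg E c a b \<Longrightarrow> s a b * d c = s a c * s c b" for a b c
    using am_sep[OF M] .
  have pq: "p \<noteq> q" "p \<noteq> x" "q \<noteq> x" using sepg_dist[OF sx] by auto
  have hx: "s p q * d x = s p x * s x q" by (rule sep_eq[OF sx])
  consider "p = y" | "q = y" | "p \<noteq> y" "q \<noteq> y" by blast
  then show False
  proof cases
    case 1
    then have qy: "q \<noteq> y" using pq by auto
    have h1: "s x q * d y = s x y * s y q" using sep_eq[OF ally[OF pq(3) qy]] .
    have h2: "s y q * d x = s y x * s x q" using hx 1 by simp
    have "(s x q * d y) * (s y q * d x) = (s x y * s y q) * (s y x * s x q)" using h1 h2 by simp
    then have "(s x q * s y q) * (d x * d y - (s x y)^2) = 0"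
      using sym[of y x] by (simp add: algebra_simps power2_eq_square)
    moreover have "s x q * s y q \<noteq> 0" using nz pq qy by auto
    ultimately have "d x * d y = (s x y)^2" by simp
    with pd2 show False by simp
  next
    case 2
    then have py: "p \<noteq> y" using pq by auto
    have h1: "s x p * d y = s x y * s y p" using sep_eq[OF ally[OF pq(2) py]] .
    have h2: "s p y * d x = s p x * s x y" using hx 2 by simp
    have "(s x p * d y) * (s p y * d x) = (s x y * s y p) * (s p x * s x y)" using h1 h2 by simp
    then have "(s x p * s p y) * (d x * d y - (s x y)^2) = 0"
      using sym[of y p] sym[of p x] by (simp add: algebra_simps power2_eq_square)
    moreover have "s x p * s p y \<noteq> 0" using nz pq py by auto
    ultimately have "d x * d y = (s x y)^2" by simp
    with pd2 show False by simp
  next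
    case 3
    have h1: "s x p * d y = s x y * s y p" using sep_eq[OF ally[OF pq(2) 3(1)]] .
    have h2: "s x q * d y = s x y * s y q" using sep_eq[OF ally[OF pq(3) 3(2)]] .
    have "s p q * (d x * (d y * d y)) = s p y * s y q * (s x y)^2"
    proof -
      have "s p q * (d x * (d y * d y)) = (s p x * d y) * (s x q * d y)" using hx by (simp add: algebra_simps)
      also have "\<dots> = (s x y * s y p) * (s x y * s y q)" using h1 h2 sym[of p x] by simp
      finally show ?thesis using sym[of y p] by (simp add: algebra_simps power2_eq_square)
    qed
    then have "s p q * (d x * (d y * d y) / (s x y)^2) = s p y * s y q"
      using nz[OF xy] by (simp add: field_simps)
    then have "d x * (d y * d y) / (s x y)^2 \<le> d y"
      using cmp(1)[OF M pq(1) 3(1) 3(2)] by blast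
    then have "d x * (d y * d y) \<le> d y * (s x y)^2"
      using nz[OF xy] by (simp add: field_simps)
    then have "d y * (d x * d y) \<le> d y * (s x y)^2" by (simp add: mult_ac)
    then have "d x * d y \<le> (s x y)^2" using mult_le_cancel_left_pos[OF dpos[of y]] by blast
    with pd2 show False by simp
  qed
qed

definition badp :: "('n::finite \<Rightarrow> 'n \<Rightarrow> bool) \<Rightarrow> ('n \<Rightarrow> 'n \<Rightarrow> bool) \<Rightarrow> 'n \<Rightarrow> 'n \<Rightarrow> bool" where
  "badp EA EB x y \<longleftrightarrow> is_leaf EA x \<and> EA x y \<and> (\<exists>p q. sepg EB x p q)"

lemma step:
  assumes MA: "amodel EA dA s" and MB: "amodel EB dB s" and bad: "badp EA EB x y"
  shows "\<exists>w. badp EB EA y w \<and> \<bar>s x y\<bar> < \<bar>s y w\<bar>"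
proof -
  have sym: "s u w = s w u" for u w using am_sym[OF MA] .
  have nz: "u \<noteq> w \<Longrightarrow> s u w \<noteq> 0" for u w using am_nz[OF MA] .
  have dApos: "dA u > 0" for u using am_dpos[OF MA] .
  have dBpos: "dB u > 0" for u using am_dpos[OF MB] .
  have sepA: "sepg EA c a b \<Longrightarrow> s a b * dA c = s a c * s c b" for a b c using am_sep[OF MA] .
  have sepB: "sepg EB c a b \<Longrightarrow> s a b * dB c = s a c * s c b" for a b c using am_sep[OF MB] .
  have leafA: "is_leaf EA u \<Longrightarrow> EA u v \<Longrightarrow> \<bar>s u v\<bar> < dA v" for u v using am_leaf[OF MA] .
  have leafB: "is_leaf EB u \<Longrightarrow> EB u v \<Longrightarrow> \<bar>s u v\<bar> < dB v" for u v using am_leaf[OF MB] .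
  have lsA: "is_leaf EA u \<Longrightarrow> EA u v \<Longrightarrow> a \<noteq> u \<Longrightarrow> a \<noteq> v \<Longrightarrow> sepg EA v u a" for u v a
    using am_ls[OF MA] .
  have lsB: "is_leaf EB u \<Longrightarrow> EB u v \<Longrightarrow> a \<noteq> u \<Longrightarrow> a \<noteq> v \<Longrightarrow> sepg EB v u a" for u v a
    using am_ls[OF MB] .
  have nlB: "v \<noteq> w \<Longrightarrow> (\<forall>a b. \<not> sepg EB v a b) \<Longrightarrow> is_leaf EB v" for v w
    using am_nl[OF MB] .
  have adjA: "EA a b \<Longrightarrow> a \<noteq> b" for a b using am_adj[OF MA] by blast
  have adjB: "EB a b \<Longrightarrow> a \<noteq> b" for a b using am_adj[OF MB] by blast
  from bad obtain p q where lx: "is_leaf EA x" and exy: "EA x y" and spq: "sepg EB x p q"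
    by (auto simp: badp_def)
  have pq: "p \<noteq> q" "p \<noteq> x" "q \<noteq> x" using sepg_dist[OF spq] by auto
  have xy: "x \<noteq> y" using adjA[OF exy] .
  obtain a where ax: "a \<noteq> x" and ay: "a \<noteq> y" using pq by metis
  have allA: "sepg EA y x b" if "b \<noteq> x" "b \<noteq> y" for b using lsA[OF lx exy that] .
  have niB: "\<forall>a b. \<not> sepg EB y a b"
  proof (intro allI notI)
    fix a' b' assume sb: "sepg EB y a' b'"
    have eq: "dA y = dB y" using int_eq[OF MA MB allA[OF ax ay] sb] .
    have "sepg EB y x b" if "b \<noteq> x" "b \<noteq> y" for b
      using sep_transfer[OF MA MB eq allA[OF that]] .
    then show False using only_nb[OF MB xy _ spq] by blast
  qed
  have ly: "is_leaf EB y" using nlB[OF xy[symmetric] niB] .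
  obtain w where eyw: "EB y w" using leaf_nb[OF ly] by blast
  have yw: "y \<noteq> w" using adjB[OF eyw] .
  show ?thesis
  proof (cases "w = x")
    case True
    have s1: "sepg EB x y a" using lsB[OF ly] eyw True ay ax by blast
    have s2: "sepg EA y x a" using allA[OF ax ay] .
    have h1: "s y a * dB x = s y x * s x a" using sepB[OF s1] .
    have h2: "s x a * dA y = s x y * s y a" using sepA[OF s2] .
    have "(s y a * dB x) * (s x a * dA y) = (s y x * s x a) * (s x y * s y a)" using h1 h2 by simp
    then have "(s y a * s x a) * (dB x * dA y - (s x y)^2) = 0"
      using sym[of y x] by (simp add: algebra_simps power2_eq_square)
    moreover have "s y a * s x a \<noteq> 0" using nz ax ay by auto
    ultimately have e: "dB x * dA y = (s x y)^2" by simp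
    have l1: "\<bar>s x y\<bar> < dA y" using leafA[OF lx exy] .
    have l2: "\<bar>s x y\<bar> < dB x" using leafB[OF ly eyw] True sym[of y x] by simp
    have "\<bar>s x y\<bar> * \<bar>s x y\<bar> < dB x * dA y"
      by (rule mult_strict_mono[OF l2 l1 dBpos abs_ge_zero])
    then have "(s x y)^2 < dB x * dA y" by (simp only: power2_eq_square abs_mult_self_eq)
    with e show ?thesis by simp
  next
    case False
    have s1: "sepg EB w y x" using lsB[OF ly eyw] False xy by blast
    have s2: "sepg EA y x w" using allA False yw by blast
    have h1: "s y x * dB w = s y w * s w x" using sepB[OF s1] .
    have h2: "s x w * dA y = s x y * s y w" using sepA[OF s2] .
    have "(s y x * dB w) * (s x w * dA y) = (s y w * s w x) * (s x y * s y w)" using h1 h2 by simp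
    then have "(s y x * s x w) * (dB w * dA y - (s y w)^2) = 0"
      using sym[of y x] sym[of w x] by (simp add: algebra_simps power2_eq_square)
    moreover have "s y x * s x w \<noteq> 0" using nz xy False by auto
    ultimately have e: "dB w * dA y = (s y w)^2" by simp
    have l1: "\<bar>s x y\<bar> < dA y" using leafA[OF lx exy] .
    have l2: "\<bar>s y w\<bar> < dB w" using leafB[OF ly eyw] .
    have "dB w * dA y = \<bar>s y w\<bar> * \<bar>s y w\<bar>" using e by (simp add: power2_eq_square abs_mult_self_eq)
    also have "\<dots> < dB w * \<bar>s y w\<bar>" by (rule mult_strict_right_mono[OF l2]) (use nz[OF yw] in simp)
    finally have "dA y < \<bar>s y w\<bar>" using dBpos[of w] by simp
    with l1 have "\<bar>s x y\<bar> < \<bar>s y w\<bar>" by simp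
    moreover have "badp EB EA y w" using ly eyw s2 by (auto simp: badp_def)
    ultimately show ?thesis by blast
  qed
qed

lemma amodel_unique:
  assumes M1: "amodel E1 d1 s" and M2: "amodel E2 d2 s"
  shows "E1 = E2"
proof -
  define P where "P = {(x,y). badp E1 E2 x y \<or> badp E2 E1 x y}"
  have noP: "P = {}"
  proof (rule ccontr)
    assume ne: "P \<noteq> {}"
    define f where "f = (\<lambda>(x,y). \<bar>s x y\<bar>)"
    have fin: "finite (f ` P)" by simp
    have "Max (f ` P) \<in> f ` P" using fin ne by (intro Max_in) auto
    then obtain x y where xyP: "(x,y) \<in> P" and mx: "f (x,y) = Max (f ` P)" by auto
    have "\<exists>w. (y,w) \<in> P \<and> \<bar>s x y\<bar> < \<bar>s y w\<bar>"
    proof (cases "badp E1 E2 x y")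
      case True
      from step[OF M1 M2 True] obtain w where "badp E2 E1 y w" "\<bar>s x y\<bar> < \<bar>s y w\<bar>" by blast
      then show ?thesis by (auto simp: P_def)
    next
      case False
      then have "badp E2 E1 x y" using xyP by (auto simp: P_def)
      from step[OF M2 M1 this] obtain w where "badp E1 E2 y w" "\<bar>s x y\<bar> < \<bar>s y w\<bar>" by blast
      then show ?thesis by (auto simp: P_def)
    qed
    then obtain w where wP: "(y,w) \<in> P" and lt: "\<bar>s x y\<bar> < \<bar>s y w\<bar>" by blast
    have "f (y,w) \<le> Max (f ` P)" using fin wP by (intro Max_ge) auto
    with mx lt show False by (simp add: f_def)
  qed
  have int_iff: "(\<exists>a b. sepg E1 v a b) \<longleftrightarrow> (\<exists>a b. sepg E2 v a b)" for v
  proof -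
    have gen: "\<exists>a b. sepg EB v a b"
      if MA: "amodel EA dA s" and MB: "amodel EB dB s" and nb: "\<forall>x y. \<not> badp EB EA x y"
         and sa: "sepg EA v a b" for EA EB dA dB a b
    proof (rule ccontr)
      assume n: "\<not> (\<exists>a b. sepg EB v a b)"
      have "a \<noteq> v" using sepg_dist[OF sa] by auto
      have "is_leaf EB v" by (rule am_nl[OF MB, of v a]) (use n \<open>a \<noteq> v\<close> in auto)
      then obtain z where "EB v z" using leaf_nb by blast
      then have "badp EB EA v z" using \<open>is_leaf EB v\<close> sa by (auto simp: badp_def)
      with nb show False by blast
    qed
    have nb1: "\<forall>x y. \<not> badp E1 E2 x y" and nb2: "\<forall>x y. \<not> badp E2 E1 x y"
      using noP by (auto simp: P_def)
    show ?thesis using gen[OF M1 M2 nb2] gen[OF M2 M1 nb1] by blast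
  qed
  have sep_eq: "sepg E1 c a b \<longleftrightarrow> sepg E2 c a b" for c a b
  proof (cases "\<exists>a b. sepg E1 c a b")
    case True
    then obtain a1 b1 where s1: "sepg E1 c a1 b1" by blast
    from True int_iff obtain a2 b2 where s2: "sepg E2 c a2 b2" by blast
    have eq: "d1 c = d2 c" using int_eq[OF M1 M2 s1 s2] .
    show ?thesis using sep_transfer[OF M1 M2 eq] sep_transfer[OF M2 M1 eq[symmetric]] by blast
  next
    case False
    then show ?thesis using int_iff by blast
  qed
  have "E1 a b = E2 a b" for a b
  proof -
    have "E1 a b \<longleftrightarrow> a \<noteq> b \<and> (\<forall>c. \<not> sepg E1 c a b)" by (rule am_adj[OF M1])
    moreover have "E2 a b \<longleftrightarrow> a \<noteq> b \<and> (\<forall>c. \<not> sepg E2 c a b)" by (rule am_adj[OF M2])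
    ultimately show ?thesis using sep_eq by blast
  qed
  then show ?thesis by blast
qed

definition offd :: "real^'n^'n \<Rightarrow> 'n \<Rightarrow> 'n \<Rightarrow> real" where
  "offd S a b = (if a = b then 0 else S$a$b)"

context tmodel
begin

lemma amodel: "amodel E (\<lambda>c. S$c$c) (offd S)"
proof -
  have l1: "\<forall>a b. offd S a b = offd S b a" by (simp add: offd_def S_sym)
  have l2: "\<forall>a b. a \<noteq> b \<longrightarrow> offd S a b \<noteq> 0"
  proof (intro allI impI)
    fix a b :: 'n assume "a \<noteq> b"
    have "sg a * sg b * S$a$b > 0" by (rule pos)
    then have "S$a$b \<noteq> 0" by auto
    with \<open>a \<noteq> b\<close> show "offd S a b \<noteq> 0" by (simp add: offd_def)
  qed
  have l3: "\<forall>a b c. a \<noteq> b \<and> a \<noteq> c \<and> b \<noteq> c \<longrightarrow> sepg E c a b \<longrightarrow> offd S a b * S$c$c = offd S a c * offd S c b"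
    using tau(1) by (auto simp: offd_def)
  have l4: "\<forall>a b c. a \<noteq> b \<and> a \<noteq> c \<and> b \<noteq> c \<longrightarrow> \<not> sepg E c a b \<longrightarrow> offd S a b * (offd S a b * S$c$c - offd S a c * offd S c b) > 0"
    using tau(2) by (auto simp: offd_def)
  have l5: "\<forall>a b. a \<noteq> b \<longrightarrow> (offd S a b)^2 < S$a$a * S$b$b"
    using pd2 by (auto simp: offd_def)
  have l6: "\<forall>a. S$a$a > 0" using diag_pos by blast
  have l7: "\<forall>a b. is_leaf E a \<and> E a b \<longrightarrow> \<bar>offd S a b\<bar> < S$b$b"
  proof (intro allI impI)
    fix a b assume h: "is_leaf E a \<and> E a b"
    then have "a \<noteq> b" using E_irr by auto
    then show "\<bar>offd S a b\<bar> < S$b$b" using leafS h by (simp add: offd_def)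
  qed
  have l8: "\<forall>x y a. is_leaf E x \<and> E x y \<and> a \<noteq> x \<and> a \<noteq> y \<longrightarrow> sepg E y x a"
    using leaf_sep[where E=E] E_irr by blast
  have l9: "\<forall>v w. v \<noteq> w \<and> (\<forall>a b. \<not> sepg E v a b) \<longrightarrow> is_leaf E v"
  proof (intro allI impI)
    fix v w assume h: "v \<noteq> w \<and> (\<forall>a b. \<not> sepg E v a b)"
    show "is_leaf E v"
      by (rule nonint_leaf[of E w v]) (use E_sym E_irr tr h in auto)
  qed
  have l10: "\<forall>a b. E a b \<longleftrightarrow> a \<noteq> b \<and> (\<forall>c. \<not> sepg E c a b)"
  proof (intro allI iffI)
    fix a b assume "E a b"
    then show "a \<noteq> b \<and> (\<forall>c. \<not> sepg E c a b)" using adj_nosep E_irr by metis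
  next
    fix a b assume h: "a \<noteq> b \<and> (\<forall>c. \<not> sepg E c a b)"
    show "E a b"
    proof (rule ccontr)
      assume "\<not> E a b"
      then obtain c where "sepg E c a b"
        using nonadj_sep[of E a b] E_sym E_irr tr h by blast
      with h show False by blast
    qed
  qed
  show ?thesis unfolding amodel_def
    by (intro conjI) (fact l1 l2 l3 l4 l5 l6 l7 l8 l9 l10)+
qed

end

theorem theorem4:
  fixes S_star D_star S_o S' D' :: "real^'n::finite^'n"
  assumes "pos_def S_star" and "is_tree (ci_adj S_star)" and "leaf_cond S_star"
    and "nonneg_diag D_star" and "S_o = S_star + D_star"
    and "S_o = S' + D'" and "pos_def S'" and "is_tree (ci_adj S')"
    and "nonneg_diag D'" and "leaf_cond S'"
  shows "ci_adj S' = ci_adj S_star"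
proof -
  interpret m1: tmodel S_star by unfold_locales (use assms in auto)
  interpret m2: tmodel S' by unfold_locales (use assms in auto)
  have off: "offd S' = offd S_star"
  proof (intro ext)
    fix a b :: 'n
    show "offd S' a b = offd S_star a b"
    proof (cases "a = b")
      case True then show ?thesis by (simp add: offd_def)
    next
      case False
      have "S_o$a$b = S_star$a$b + D_star$a$b" using assms(5) by simp
      moreover have "S_o$a$b = S'$a$b + D'$a$b" using assms(6) by simp
      moreover have "D_star$a$b = 0" "D'$a$b = 0" using assms(4,9) False by (auto simp: nonneg_diag_def)
      ultimately show ?thesis using False by (simp add: offd_def)
    qed
  qed
  have A1: "amodel (ci_adj S_star) (\<lambda>c. S_star$c$c) (offd S_star)" by (rule m1.amodel)
  have A2: "amodel (ci_adj S') (\<lambda>c. S'$c$c) (offd S_star)" using m2.amodel off by simp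
  show ?thesis by (rule amodel_unique[OF A2 A1])
qed

end
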